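(* Let $F$ be any field, $N\in\mathbb{N}$, and $p,p'\in\mathbb{N}$ with $p+p'\le N+1$. If $x\in F^{N+1}$ satisfies $\operatorname{rank}(H_{p,p'-1}(x))>p$, then $\operatorname{rank}(H_{p-1,p'}(x))=p$.
   Context: $\mathbb{N}=\{0,1,2,\ldots\}$. For $N\in\mathbb{N}$, $x=(x_0,\ldots,x_N)\in F^{N+1}$ and integers $s,t\ge -1$ with $s+t\le N$, the Hankel matrix $H_{s,t}(x)$ is the $(s+1)\times(t+1)$ matrix $(x_{i+j})_{0\le i\le s,\,0\le j\le t}$ (a matrix with zero rows or columns has rank $0$). *)

theory Defs
  imports "Jordan_Normal_Form.DL_Rank"
begin

text \<open>Hankel matrix H_{s,t}(x) with s+1 rows and t+1 columns, entries x(i+j).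
  Here it is parametrised by the numbers of rows and columns (r = s+1, c = t+1),
  so that s,t = -1 corresponds to r,c = 0.  The vector x in F^(N+1) is a function
  nat => 'a; only x 0 .. x N are used when r + c - 2 <= N.\<close>
definition hankel :: "nat \<Rightarrow> nat \<Rightarrow> (nat \<Rightarrow> 'a) \<Rightarrow> 'a mat" where
  "hankel r c x = mat r c (\<lambda>(i,j). x (i + j))"

definition hrank :: "nat \<Rightarrow> 'a::field mat \<Rightarrow> nat" where
  "hrank r A = vec_space.rank r A"

end

theory Submission
  imports Defs
begin

context vec_space
begin

lemma rank_le_nr:
  assumes A: "A \<in> carrier_mat n nc"
  shows "rank A \<le> n"
proof -
  obtain S where S: "maximal S (\<lambda>T. T \<subseteq> set (cols A) \<and> lin_indpt T)"
    using maximal_exists[of "(\<lambda>T. T \<subseteq> set (cols A) \<and> lin_indpt T)" "card (set (cols A))" "{}"]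
    by (meson List.finite_set card_mono empty_iff empty_subsetI finite_lin_indpt2 rev_finite_subset)
  have sc: "set (cols A) \<subseteq> carrier_vec n" using cols_dim A by (metis carrier_matD(1))
  have sub0: "S \<subseteq> set (cols A)" using S unfolding maximal_def by blast
  have sub: "S \<subseteq> carrier_vec n" using sub0 sc by (rule subset_trans)
  have li: "lin_indpt S" using S unfolding maximal_def by blast
  have "card S \<le> dim" by (rule li_le_dim(2)[OF fin_dim sub li])
  then show ?thesis using rank_card_indpt[OF A S] dim_is_n by simp
qed

lemma max_exists_cols:
  obtains S where "maximal S (\<lambda>T. T \<subseteq> set (cols A) \<and> lin_indpt T)"
    using maximal_exists[of "(\<lambda>T. T \<subseteq> set (cols A) \<and> lin_indpt T)" "card (set (cols A))" "{}"]
    by (meson List.finite_set card_mono empty_iff empty_subsetI finite_lin_indpt2 rev_finite_subset)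

lemma full_rank_span:
  assumes A: "A \<in> carrier_mat n nc" and r: "rank A \<ge> n"
  shows "span (set (cols A)) = carrier_vec n"
proof -
  obtain S where S: "maximal S (\<lambda>T. T \<subseteq> set (cols A) \<and> lin_indpt T)"
    by (rule max_exists_cols)
  have sc: "set (cols A) \<subseteq> carrier_vec n" using cols_dim A by (metis carrier_matD(1))
  have sub0: "S \<subseteq> set (cols A)" using S unfolding maximal_def by blast
  have sub: "S \<subseteq> carrier_vec n" using sub0 sc by (rule subset_trans)
  have li: "lin_indpt S" using S unfolding maximal_def by blast
  have fin: "finite S" using sub0 List.finite_set by (rule finite_subset)
  have "card S \<ge> dim" using rank_card_indpt[OF A S] r dim_is_n by simp
  then have "basis S" by (rule dim_li_is_basis[OF fin_dim fin sub li])
  then have 1: "span S = carrier_vec n" unfolding basis_def by simp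
  have 2: "span S \<subseteq> span (set (cols A))" by (rule span_is_monotone[OF sub0])
  have 3: "span (set (cols A)) \<subseteq> carrier_vec n" using span_is_subset2[OF sc] .
  show ?thesis using 1 2 3 by (rule_tac equalityI) auto
qed

lemma span_full_rank:
  assumes "span (set (cols A)) = carrier_vec n"
  shows "rank A = n"
proof -
  have "span_vs (set (cols A)) = V" unfolding assms by simp
  then show ?thesis unfolding rank_def using dim_is_n by simp
qed
end

theorem lemma10:
  fixes x :: "nat \<Rightarrow> 'a::field" and N p p' :: nat
  assumes "p + p' \<le> N + 1"
    and "hrank (p + 1) (hankel (p + 1) p' x) > p"
  shows "hrank p (hankel p (p' + 1) x) = p"
proof -
  interpret VA: vec_space "TYPE('a)" "p+1" .
  interpret VB: vec_space "TYPE('a)" p .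
  define A where "A = hankel (p + 1) p' x"
  define B where "B = hankel p (p' + 1) x"
  have Ac: "A \<in> carrier_mat (p+1) p'" unfolding A_def hankel_def by simp
  have Bc: "B \<in> carrier_mat p (p'+1)" unfolding B_def hankel_def by simp
  have rA: "VA.rank A \<ge> p + 1" using assms(2) unfolding A_def hrank_def by simp
  have spA: "VA.span (set (cols A)) = carrier_vec (p+1)"
    by (rule VA.full_rank_span[OF Ac rA])
  hence csA: "{y\<in>carrier_vec (dim_row A). \<exists>c\<in>carrier_vec (dim_col A). A *\<^sub>v c = y} = carrier_vec (p+1)"
    using VA.col_space_eq[OF Ac] unfolding VA.col_space_def by simp
  have scB: "set (cols B) \<subseteq> carrier_vec p" using cols_dim Bc by (metis carrier_matD(1))
  have "VB.span (set (cols B)) = carrier_vec p"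
  proof
    show "VB.span (set (cols B)) \<subseteq> carrier_vec p"
      using VB.span_is_subset2[OF scB] by simp
  next
    show "carrier_vec p \<subseteq> VB.span (set (cols B))"
    proof
      fix v :: "'a vec" assume v: "v \<in> carrier_vec p"
      define w where "w = vec (p+1) (\<lambda>i. if i < p then v $ i else 0)"
      have "w \<in> carrier_vec (p+1)" unfolding w_def by simp
      then obtain c where c: "c \<in> carrier_vec p'" and Aw: "A *\<^sub>v c = w"
        using csA Ac by auto
      define d where "d = vec (p'+1) (\<lambda>j. if j < p' then c $ j else 0)"
      have dc: "d \<in> carrier_vec (p'+1)" unfolding d_def by simp
      have "B *\<^sub>v d = v"
      proof (rule eq_vecI)
        show "dim_vec (B *\<^sub>v d) = dim_vec v" using Bc v by simp
        fix i assume "i < dim_vec v"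
        hence i: "i < p" using v by simp
        have "(B *\<^sub>v d) $ i = (\<Sum>j<p'+1. x (i+j) * d $ j)"
          using i Bc unfolding B_def hankel_def
          by (simp add: mult_mat_vec_def scalar_prod_def d_def lessThan_atLeast0)
        also have "\<dots> = (\<Sum>j<p'. x (i+j) * c $ j)"
          by (simp add: d_def)
        also have "\<dots> = (A *\<^sub>v c) $ i"
          using i Ac c unfolding A_def hankel_def
          by (simp add: mult_mat_vec_def scalar_prod_def lessThan_atLeast0)
        also have "\<dots> = v $ i" using Aw i unfolding w_def by simp
        finally show "(B *\<^sub>v d) $ i = v $ i" .
      qed
      then show "v \<in> VB.span (set (cols B))"
        using VB.col_space_eq[OF Bc] dc Bc v unfolding VB.col_space_def by auto
    qed
  qed
  then have "VB.rank B = p" by (rule VB.span_full_rank)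
  then show ?thesis unfolding B_def hrank_def .
qed

end
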